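(* For every $n\ge4$, $\mathbf{M}_n$ is firm and minimally non-superfirm, and $\mathbf{M}_n^{\{(n,n)\}}$ is a minimally non-firm generalised binary matrix.
   Context: A generalised binary matrix has entries in $\{0,1,?\}$; for such $\mathbf{Y}$, $\mathrm{supp}(\mathbf{Y})=\{(i,j):y_{i,j}=1\}$. A submatrix is obtained by deleting rows and columns; it is proper if it omits at least one row or column. A rectangle of $\mathbf{Y}$ is a set $I\times J$ of positions containing no $0$ entry. An isolated set is a subset of $\mathrm{supp}(\mathbf{Y})$ no two distinct elements of which lie in a common rectangle; $i(\mathbf{Y})$ is its maximum size; $br(\mathbf{Y})$ is the minimum number of rectangles whose union contains $\mathrm{supp}(\mathbf{Y})$ ($?$ entries need not be covered). $\mathbf{Y}$ is firm if $i(\mathbf{Y}')=br(\mathbf{Y}')$ for every submatrix $\mathbf{Y}'$ including $\mathbf{Y}$; minimally non-firm if $i(\mathbf{Y})<br(\mathbf{Y})$ and $i(\mathbf{Y}')=br(\mathbf{Y}')$ for all proper submatrices $\mathbf{Y}'$. For a binary $\mathbf{X}$ and $P\subseteq\mathrm{supp}(\mathbf{X})$, $\mathbf{X}^P$ is obtained by replacing the entries in $P$ by $?$. The rectangle cover graph $\mathcal{G}(\mathbf{X})$ has vertex set $\mathrm{supp}(\mathbf{X})$, two vertices adjacent iff a rectangle contains both; $\mathbf{X}$ is superfirm if $\mathcal{G}(\mathbf{X})$ is perfect, and minimally non-superfirm if it is not superfirm but all proper submatrices are superfirm. For $t\ge3$, $\mathbf{C}_t\in\{0,1\}^{t\times t}$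 has $1$s exactly at $(i,i),(i,i+1)$ for $i\in[t-1]$ and at $(t,1),(t,t)$. For $n\ge4$, $\mathbf{M}_n\in\{0,1\}^{n\times n}$ has top-left $(n-1)\times(n-1)$ block $\mathbf{C}_{n-1}$, entries $(n-1,n)$, $(n,n-1)$, $(n,n)$ equal to $1$, and all other entries in row $n$ and column $n$ equal to $0$ (i.e. $\mathbf{M}_n$ is obtained from $\mathbf{C}_{n-1}$ by stretching its $1$ at $(n-1,n-1)$). *)

theory Defs
  imports Main
begin

text \<open>A generalised binary matrix is given by a finite row index set R, a finite column
index set C (subsets of nat, 1-based) and an entry function. Submatrices are obtained by
restricting to subsets R' of R and C' of C (deleting rows/columns).\<close>

datatype entry = Zero | One | Qm

type_synonym gmat = "nat \<Rightarrow> nat \<Rightarrow> entry"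

definition supp :: "nat set \<Rightarrow> nat set \<Rightarrow> gmat \<Rightarrow> (nat \<times> nat) set" where
  "supp R C Y = {(i,j). i \<in> R \<and> j \<in> C \<and> Y i j = One}"

definition is_rect :: "nat set \<Rightarrow> nat set \<Rightarrow> gmat \<Rightarrow> nat set \<Rightarrow> nat set \<Rightarrow> bool" where
  "is_rect R C Y I J \<longleftrightarrow> I \<subseteq> R \<and> J \<subseteq> C \<and> (\<forall>i\<in>I. \<forall>j\<in>J. Y i j \<noteq> Zero)"

definition isolated :: "nat set \<Rightarrow> nat set \<Rightarrow> gmat \<Rightarrow> (nat \<times> nat) set \<Rightarrow> bool" where
  "isolated R C Y S \<longleftrightarrow> S \<subseteq> supp R C Y \<and>
     (\<forall>p\<in>S. \<forall>q\<in>S. p \<noteq> q \<longrightarrow> \<not> (\<exists>I J. is_rect R C Y I J \<and> p \<in> I \<times> J \<and> q \<in> I \<times> J))"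

definition iso_num :: "nat set \<Rightarrow> nat set \<Rightarrow> gmat \<Rightarrow> nat" where
  "iso_num R C Y = Max {card S | S. isolated R C Y S}"

definition rect_cover :: "nat set \<Rightarrow> nat set \<Rightarrow> gmat \<Rightarrow> (nat set \<times> nat set) set \<Rightarrow> bool" where
  "rect_cover R C Y F \<longleftrightarrow> finite F \<and> (\<forall>(I,J)\<in>F. is_rect R C Y I J) \<and>
     supp R C Y \<subseteq> (\<Union>(I,J)\<in>F. I \<times> J)"

definition br :: "nat set \<Rightarrow> nat set \<Rightarrow> gmat \<Rightarrow> nat" where
  "br R C Y = (LEAST k. \<exists>F. rect_cover R C Y F \<and> card F = k)"

definition firm :: "nat set \<Rightarrow> nat set \<Rightarrow> gmat \<Rightarrow> bool" where
  "firm R C Y \<longleftrightarrow> (\<forall>R' C'. R' \<subseteq> R \<longrightarrow> C' \<subseteq> C \<longrightarrow> iso_num R' C' Y = br R' C' Y)"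

definition min_non_firm :: "nat set \<Rightarrow> nat set \<Rightarrow> gmat \<Rightarrow> bool" where
  "min_non_firm R C Y \<longleftrightarrow> iso_num R C Y < br R C Y \<and>
     (\<forall>R' C'. R' \<subseteq> R \<longrightarrow> C' \<subseteq> C \<longrightarrow> (R', C') \<noteq> (R, C) \<longrightarrow> iso_num R' C' Y = br R' C' Y)"

definition clique_num :: "'a set \<Rightarrow> ('a \<Rightarrow> 'a \<Rightarrow> bool) \<Rightarrow> nat" where
  "clique_num V E = Max {card K | K. K \<subseteq> V \<and> (\<forall>x\<in>K. \<forall>y\<in>K. x \<noteq> y \<longrightarrow> E x y)}"

definition chrom_num :: "'a set \<Rightarrow> ('a \<Rightarrow> 'a \<Rightarrow> bool) \<Rightarrow> nat" where
  "chrom_num V E = (LEAST k. \<exists>f :: 'a \<Rightarrow> nat. (\<forall>x\<in>V. f x < k) \<and>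
      (\<forall>x\<in>V. \<forall>y\<in>V. x \<noteq> y \<longrightarrow> E x y \<longrightarrow> f x \<noteq> f y))"

definition perfect :: "'a set \<Rightarrow> ('a \<Rightarrow> 'a \<Rightarrow> bool) \<Rightarrow> bool" where
  "perfect V E \<longleftrightarrow> (\<forall>W. W \<subseteq> V \<longrightarrow> chrom_num W E = clique_num W E)"

definition rc_adj :: "nat set \<Rightarrow> nat set \<Rightarrow> gmat \<Rightarrow> nat \<times> nat \<Rightarrow> nat \<times> nat \<Rightarrow> bool" where
  "rc_adj R C X p q \<longleftrightarrow> p \<noteq> q \<and> (\<exists>I J. is_rect R C X I J \<and> p \<in> I \<times> J \<and> q \<in> I \<times> J)"

definition superfirm :: "nat set \<Rightarrow> nat set \<Rightarrow> gmat \<Rightarrow> bool" where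
  "superfirm R C X \<longleftrightarrow> perfect (supp R C X) (rc_adj R C X)"

definition min_non_superfirm :: "nat set \<Rightarrow> nat set \<Rightarrow> gmat \<Rightarrow> bool" where
  "min_non_superfirm R C X \<longleftrightarrow> \<not> superfirm R C X \<and>
     (\<forall>R' C'. R' \<subseteq> R \<longrightarrow> C' \<subseteq> C \<longrightarrow> (R', C') \<noteq> (R, C) \<longrightarrow> superfirm R' C' X)"

definition binary :: "nat set \<Rightarrow> nat set \<Rightarrow> gmat \<Rightarrow> bool" where
  "binary R C X \<longleftrightarrow> (\<forall>i\<in>R. \<forall>j\<in>C. X i j \<noteq> Qm)"

text \<open>X^P: replace the entries in P by ?.\<close>
definition qmark :: "gmat \<Rightarrow> (nat \<times> nat) set \<Rightarrow> gmat" where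
  "qmark X P = (\<lambda>i j. if (i,j) \<in> P then Qm else X i j)"

definition Cmat :: "nat \<Rightarrow> gmat" where
  "Cmat t = (\<lambda>i j. if (1 \<le> i \<and> i < t \<and> (j = i \<or> j = i + 1)) \<or> (i = t \<and> (j = 1 \<or> j = t))
                   then One else Zero)"

definition Mmat :: "nat \<Rightarrow> gmat" where
  "Mmat n = (\<lambda>i j. if i \<le> n - 1 \<and> j \<le> n - 1 then Cmat (n - 1) i j
                   else if (i, j) \<in> {(n - 1, n), (n, n - 1), (n, n)} then One else Zero)"

end

theory Submission
  imports Defs
begin

definition nzs :: "gmat \<Rightarrow> (nat\<times>nat) set" where "nzs Y = {(i,j). Y i j \<noteq> Zero}"

definition adjs :: "(nat\<times>nat) set \<Rightarrow> nat\<times>nat \<Rightarrow> nat\<times>nat \<Rightarrow> bool" where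
 "adjs V p q \<longleftrightarrow> p \<in> V \<and> q \<in> V \<and> (fst p, snd q) \<in> V \<and> (fst q, snd p) \<in> V"

lemma adjs_sym: "adjs V p q = adjs V q p"
  by (auto simp: adjs_def)

lemma supp_sub: "supp R C Y \<subseteq> R \<times> C"
  by (auto simp: supp_def)

lemma supp_nzs: "supp R C Y \<subseteq> nzs Y"
  by (auto simp: supp_def nzs_def)

lemma common_rect_iff:
  assumes "p \<in> R \<times> C" "q \<in> R \<times> C"
  shows "(\<exists>I J. is_rect R C Y I J \<and> p \<in> I \<times> J \<and> q \<in> I \<times> J) \<longleftrightarrow> adjs (nzs Y) p q"
proof
  assume "\<exists>I J. is_rect R C Y I J \<and> p \<in> I \<times> J \<and> q \<in> I \<times> J"
  then obtain I J where "is_rect R C Y I J" "p \<in> I \<times> J" "q \<in> I \<times> J" by blast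
  then show "adjs (nzs Y) p q"
    by (cases p, cases q) (auto simp: is_rect_def adjs_def nzs_def)
next
  assume a: "adjs (nzs Y) p q"
  have "is_rect R C Y {fst p, fst q} {snd p, snd q}"
    using a assms by (cases p, cases q) (auto simp: is_rect_def adjs_def nzs_def)
  moreover have "p \<in> {fst p, fst q} \<times> {snd p, snd q}" "q \<in> {fst p, fst q} \<times> {snd p, snd q}"
    by (cases p, cases q, auto)+
  ultimately show "\<exists>I J. is_rect R C Y I J \<and> p \<in> I \<times> J \<and> q \<in> I \<times> J"
    by (intro exI[of _ "{fst p, fst q}"] exI[of _ "{snd p, snd q}"] conjI)
qed

lemma isolated_iff:
  "isolated R C Y S \<longleftrightarrow> S \<subseteq> supp R C Y \<and> (\<forall>p\<in>S. \<forall>q\<in>S. p \<noteq> q \<longrightarrow> \<not> adjs (nzs Y) p q)"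
proof (cases "S \<subseteq> supp R C Y")
  case True
  have "p \<in> S \<Longrightarrow> q \<in> S \<Longrightarrow>
     (\<exists>I J. is_rect R C Y I J \<and> p \<in> I \<times> J \<and> q \<in> I \<times> J) \<longleftrightarrow> adjs (nzs Y) p q" for p q
    using common_rect_iff[of p R C q Y] supp_sub[of R C Y] True by (meson subsetD)
  then show ?thesis unfolding isolated_def using True by simp
next
  case False
  then show ?thesis unfolding isolated_def by simp
qed

lemma finite_supp: "finite R \<Longrightarrow> finite C \<Longrightarrow> finite (supp R C Y)"
  using supp_sub[of R C Y] by (meson finite_SigmaI finite_subset)

lemma iso_le_cover:
  assumes "isolated R C Y T" "rect_cover R C Y F"
  shows "card T \<le> card F"
proof -
  have ex: "\<forall>t\<in>T. \<exists>Q\<in>F. t \<in> fst Q \<times> snd Q"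
  proof
    fix t assume "t \<in> T"
    then have "t \<in> supp R C Y" using assms(1) unfolding isolated_def by blast
    then have "t \<in> (\<Union>(I,J)\<in>F. I \<times> J)" using assms(2) unfolding rect_cover_def by blast
    then show "\<exists>Q\<in>F. t \<in> fst Q \<times> snd Q" by force
  qed
  then obtain g where g: "\<forall>t\<in>T. g t \<in> F \<and> t \<in> fst (g t) \<times> snd (g t)"
    using ex by metis
  have rF: "\<forall>Q\<in>F. is_rect R C Y (fst Q) (snd Q)"
    using assms(2) unfolding rect_cover_def by auto
  have "inj_on g T"
  proof (rule inj_onI)
    fix s t assume st: "s \<in> T" "t \<in> T" "g s = g t"
    show "s = t"
    proof (rule ccontr)
      assume ne: "s \<noteq> t"
      have "is_rect R C Y (fst (g s)) (snd (g s))" "s \<in> fst (g s) \<times> snd (g s)"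
        "t \<in> fst (g s) \<times> snd (g s)"
        using g st rF by auto
      then have "\<exists>I J. is_rect R C Y I J \<and> s \<in> I \<times> J \<and> t \<in> I \<times> J" by blast
      then show False using assms(1) st(1,2) ne unfolding isolated_def by blast
    qed
  qed
  moreover have "g ` T \<subseteq> F" using g by blast
  moreover have "finite F" using assms(2) by (simp add: rect_cover_def)
  ultimately show ?thesis by (meson card_inj_on_le)
qed

lemma iso_num_attained:
  assumes "finite R" "finite C"
  shows "\<exists>T. isolated R C Y T \<and> iso_num R C Y = card T"
    and "isolated R C Y T' \<Longrightarrow> card T' \<le> iso_num R C Y"
proof -
  let ?A = "{card S | S. isolated R C Y S}"
  have "?A \<subseteq> {..card (supp R C Y)}"
    using finite_supp[OF assms] by (auto simp: isolated_def intro: card_mono)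
  then have fin: "finite ?A" using finite_subset by blast
  have "isolated R C Y {}" by (simp add: isolated_def)
  then have ne: "?A \<noteq> {}" by blast
  show "\<exists>T. isolated R C Y T \<and> iso_num R C Y = card T"
    using Max_in[OF fin ne] unfolding iso_num_def by auto
  show "isolated R C Y T' \<Longrightarrow> card T' \<le> iso_num R C Y"
    using Max_ge[OF fin] unfolding iso_num_def by blast
qed

lemma br_attained:
  assumes "finite R" "finite C"
  shows "\<exists>F. rect_cover R C Y F \<and> card F = br R C Y"
    and "rect_cover R C Y F' \<Longrightarrow> br R C Y \<le> card F'"
proof -
  let ?F = "(\<lambda>(i,j). ({i},{j})) ` supp R C Y"
  have "rect_cover R C Y ?F"
    using finite_supp[OF assms] by (auto simp: rect_cover_def is_rect_def supp_def)
  then have ex: "\<exists>k F. rect_cover R C Y F \<and> card F = k" by blast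
  show "\<exists>F. rect_cover R C Y F \<and> card F = br R C Y"
    unfolding br_def using LeastI_ex[OF ex] .
  show "rect_cover R C Y F' \<Longrightarrow> br R C Y \<le> card F'"
    unfolding br_def by (rule Least_le) blast
qed

lemma iso_le_br:
  assumes "finite R" "finite C"
  shows "iso_num R C Y \<le> br R C Y"
  using iso_num_attained(1)[OF assms] br_attained(1)[OF assms] iso_le_cover by metis

lemma iso_eq_br:
  assumes "finite R" "finite C" "isolated R C Y T" "finite F"
    "\<forall>(I,J)\<in>F. I \<times> J \<subseteq> nzs Y" "supp R C Y \<subseteq> (\<Union>(I,J)\<in>F. I \<times> J)" "card F \<le> card T"
  shows "iso_num R C Y = br R C Y"
proof -
  let ?F = "(\<lambda>(I,J). (I \<inter> R, J \<inter> C)) ` F"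
  have "rect_cover R C Y ?F"
    unfolding rect_cover_def
  proof (intro conjI)
    show "finite ?F" using assms(4) by simp
    show "\<forall>(I, J)\<in>?F. is_rect R C Y I J"
      using assms(5) by (fastforce simp: is_rect_def nzs_def)
    show "supp R C Y \<subseteq> (\<Union>(I, J)\<in>?F. I \<times> J)"
    proof
      fix p assume p: "p \<in> supp R C Y"
      then obtain I J where "(I,J) \<in> F" "p \<in> I \<times> J" using assms(6) by blast
      moreover have "p \<in> R \<times> C" using p supp_sub by blast
      ultimately show "p \<in> (\<Union>(I, J)\<in>?F. I \<times> J)" by force
    qed
  qed
  then have "br R C Y \<le> card ?F" using br_attained(2)[OF assms(1,2)] by blast
  also have "\<dots> \<le> card F" using assms(4) card_image_le by blast
  also have "\<dots> \<le> card T" by fact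
  also have "\<dots> \<le> iso_num R C Y" using iso_num_attained(2)[OF assms(1,2) assms(3)] .
  finally have "br R C Y \<le> iso_num R C Y" .
  with iso_le_br[OF assms(1,2), of Y] show ?thesis by simp
qed

definition colouring :: "'a set \<Rightarrow> ('a \<Rightarrow> 'a \<Rightarrow> bool) \<Rightarrow> nat \<Rightarrow> ('a \<Rightarrow> nat) \<Rightarrow> bool" where
  "colouring V E k f \<longleftrightarrow> (\<forall>x\<in>V. f x < k) \<and> (\<forall>x\<in>V. \<forall>y\<in>V. x \<noteq> y \<longrightarrow> E x y \<longrightarrow> f x \<noteq> f y)"

definition is_clique :: "'a set \<Rightarrow> ('a \<Rightarrow> 'a \<Rightarrow> bool) \<Rightarrow> bool" where
  "is_clique K E \<longleftrightarrow> (\<forall>x\<in>K. \<forall>y\<in>K. x \<noteq> y \<longrightarrow> E x y)"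

lemma chrom_num_alt: "chrom_num V E = (LEAST k. \<exists>f. colouring V E k f)"
  by (simp add: chrom_num_def colouring_def)

lemma clique_num_alt: "clique_num V E = Max {card K | K. K \<subseteq> V \<and> is_clique K E}"
  by (simp add: clique_num_def is_clique_def)

lemma colouring_exists:
  assumes "finite V" shows "\<exists>k f. colouring V E k f"
proof -
  obtain h where h: "bij_betw h V {0..<card V}" using ex_bij_betw_finite_nat[OF assms] by blast
  then have "colouring V E (card V) h"
    unfolding colouring_def bij_betw_def inj_on_def by auto
  then show ?thesis by blast
qed

lemma clique_facts:
  assumes "finite V"
  shows "\<exists>K. K \<subseteq> V \<and> is_clique K E \<and> card K = clique_num V E"
    and "K' \<subseteq> V \<Longrightarrow> is_clique K' E \<Longrightarrow> card K' \<le> clique_num V E"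
proof -
  let ?A = "{card K | K. K \<subseteq> V \<and> is_clique K E}"
  have "?A \<subseteq> {..card V}" using assms by (auto intro: card_mono)
  then have fin: "finite ?A" using finite_subset by blast
  have "is_clique {} E" by (simp add: is_clique_def)
  then have ne: "?A \<noteq> {}" by blast
  show "\<exists>K. K \<subseteq> V \<and> is_clique K E \<and> card K = clique_num V E"
    using Max_in[OF fin ne] unfolding clique_num_alt by auto
  show "K' \<subseteq> V \<Longrightarrow> is_clique K' E \<Longrightarrow> card K' \<le> clique_num V E"
    using Max_ge[OF fin] unfolding clique_num_alt by blast
qed

lemma clique_le_colours:
  assumes "finite V" "K \<subseteq> V" "is_clique K E" "colouring V E k f"
  shows "card K \<le> k"
proof -
  have "inj_on f K" using assms unfolding inj_on_def colouring_def is_clique_def by blast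
  moreover have "f ` K \<subseteq> {..<k}" using assms unfolding colouring_def by auto
  ultimately show ?thesis by (metis card_inj_on_le card_lessThan finite_lessThan)
qed

lemma chrom_eq_clique:
  assumes "finite V" "colouring V E (clique_num V E) f"
  shows "chrom_num V E = clique_num V E"
proof -
  have le: "chrom_num V E \<le> clique_num V E"
    unfolding chrom_num_alt using assms(2) by (intro Least_le) blast
  obtain g where g: "colouring V E (chrom_num V E) g"
    unfolding chrom_num_alt using LeastI_ex[OF colouring_exists[OF assms(1)]] by blast
  obtain K where K: "K \<subseteq> V" "is_clique K E" "card K = clique_num V E"
    using clique_facts(1)[OF assms(1)] by blast
  show ?thesis using clique_le_colours[OF assms(1) K(1,2) g] K(3) le by simp
qed

lemma chrom_ge:
  assumes "finite V" "\<And>f. \<not> colouring V E k f" "\<And>k' f. k' \<le> k \<Longrightarrow> colouring V E k' f \<Longrightarrow> colouring V E k f"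
  shows "chrom_num V E > k"
proof -
  obtain g where g: "colouring V E (chrom_num V E) g"
    unfolding chrom_num_alt using LeastI_ex[OF colouring_exists[OF assms(1)]] by blast
  show ?thesis using assms(2,3) g by (meson not_le_imp_less)
qed

lemma colouring_mono: "k' \<le> k \<Longrightarrow> colouring V E k' f \<Longrightarrow> colouring V E k f"
  unfolding colouring_def by fastforce

lemma chrom_cong:
  assumes "\<forall>x\<in>V. \<forall>y\<in>V. E x y = E' x y"
  shows "chrom_num V E = chrom_num V E'" "clique_num V E = clique_num V E'"
proof -
  have "colouring V E k f = colouring V E' k f" for k f
    using assms unfolding colouring_def by auto
  then have "colouring V E = colouring V E'" by (intro ext)
  then show "chrom_num V E = chrom_num V E'" unfolding chrom_num_alt by simp
  have "(K \<subseteq> V \<and> is_clique K E) = (K \<subseteq> V \<and> is_clique K E')" for K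
    using assms unfolding is_clique_def by blast
  then show "clique_num V E = clique_num V E'" unfolding clique_num_alt by simp
qed


definition VV :: "nat \<Rightarrow> (nat\<times>nat) set" where
 "VV k = {(a,b). (1 \<le> a \<and> a \<le> k+2 \<and> (b = a \<or> b = Suc a)) \<or> (a = k+3 \<and> (b = 1 \<or> b = k+3 \<or> b = k+4))
            \<or> (a = k+4 \<and> (b = k+3 \<or> b = k+4))}"

definition HH :: "nat \<Rightarrow> (nat\<times>nat) set" where "HH k = VV k - {(k+3,k+3),(k+4,k+4)}"
definition CY :: "nat \<Rightarrow> (nat\<times>nat) set" where "CY k = VV k - {(k+3,k+4),(k+4,k+3),(k+4,k+4)}"

definition simpl :: "(nat\<times>nat) set \<Rightarrow> (nat\<times>nat) set \<Rightarrow> nat\<times>nat \<Rightarrow> bool" where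
  "simpl V S p \<longleftrightarrow> (\<exists>I J. I \<times> J \<subseteq> V \<and> p \<in> I \<times> J \<and> (\<forall>q\<in>S. adjs V p q \<longrightarrow> q \<in> I \<times> J))"

lemma simpl_row:
  assumes "(c,d) \<in> V" "\<And>a b. (a,b) \<in> S \<Longrightarrow> (c, b) \<in> V \<Longrightarrow> (a, d) \<in> V \<Longrightarrow> (a,b) \<in> V \<Longrightarrow> a = c"
  shows "simpl V S (c,d)"
  unfolding simpl_def
proof (intro exI conjI)
  show "{c} \<times> {b. (c, b) \<in> V} \<subseteq> V" by auto
  show "(c,d) \<in> {c} \<times> {b. (c, b) \<in> V}" using assms(1) by auto
  show "\<forall>q\<in>S. adjs V (c,d) q \<longrightarrow> q \<in> {c} \<times> {b. (c, b) \<in> V}"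
    using assms(2) by (auto simp: adjs_def)
qed

lemma simpl_col:
  assumes "(c,d) \<in> V" "\<And>a b. (a,b) \<in> S \<Longrightarrow> (c, b) \<in> V \<Longrightarrow> (a, d) \<in> V \<Longrightarrow> (a,b) \<in> V \<Longrightarrow> b = d"
  shows "simpl V S (c,d)"
  unfolding simpl_def
proof (intro exI conjI)
  show "{a. (a, d) \<in> V} \<times> {d} \<subseteq> V" by auto
  show "(c,d) \<in> {a. (a, d) \<in> V} \<times> {d}" using assms(1) by auto
  show "\<forall>q\<in>S. adjs V (c,d) q \<longrightarrow> q \<in> {a. (a, d) \<in> V} \<times> {d}"
    using assms(2) by (auto simp: adjs_def)
qed

lemma simpl_blk:
  assumes "B \<times> B \<subseteq> V" "(c,d) \<in> B \<times> B"
     "\<And>a b. (a,b) \<in> S \<Longrightarrow> (c, b) \<in> V \<Longrightarrow> (a, d) \<in> V \<Longrightarrow> (a,b) \<in> V \<Longrightarrow> a \<in> B \<and> b \<in> B"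
  shows "simpl V S (c,d)"
  unfolding simpl_def
proof (intro exI conjI)
  show "B \<times> B \<subseteq> V" "(c,d) \<in> B \<times> B" by (fact assms(1), fact assms(2))
  show "\<forall>q\<in>S. adjs V (c,d) q \<longrightarrow> q \<in> B \<times> B"
  proof (intro ballI impI)
    fix q assume "q \<in> S" "adjs V (c,d) q"
    then show "q \<in> B \<times> B" using assms(3)[of "fst q" "snd q"] by (cases q) (auto simp: adjs_def)
  qed
qed

lemma blk: "{k+3,k+4} \<times> {k+3,k+4} \<subseteq> VV k"
  by (auto simp: VV_def)

lemma F_z: "simpl (VV k) S (k+4,k+4)"
  by (rule simpl_blk[OF blk]) (auto simp: VV_def)

lemma F_D1: "1 \<le> i \<Longrightarrow> i \<le> k+2 \<Longrightarrow> (i, Suc i) \<notin> S \<Longrightarrow> simpl (VV k) S (i,i)"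
  by (rule simpl_col) (auto simp: VV_def)

lemma F_D2: "2 \<le> i \<Longrightarrow> i \<le> k+2 \<Longrightarrow> (i-1, i) \<notin> S \<Longrightarrow> simpl (VV k) S (i,i)"
  by (rule simpl_row) (auto simp: VV_def)

lemma F_D3: "(k+3, 1) \<notin> S \<Longrightarrow> simpl (VV k) S (1,1)"
  by (rule simpl_row) (auto simp: VV_def)

lemma F_E1: "1 \<le> i \<Longrightarrow> i \<le> k+1 \<Longrightarrow> (i, i) \<notin> S \<Longrightarrow> simpl (VV k) S (i, Suc i)"
  by (rule simpl_col) (auto simp: VV_def)

lemma F_E2: "1 \<le> i \<Longrightarrow> i \<le> k+1 \<Longrightarrow> (Suc i, Suc i) \<notin> S \<Longrightarrow> simpl (VV k) S (i, Suc i)"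
  by (rule simpl_row) (auto simp: VV_def)

lemma F_v1: "(1,1) \<notin> S \<Longrightarrow> simpl (VV k) S (k+3, 1)"
  by (rule simpl_row) (auto simp: VV_def)

lemma F_v2: assumes "(k+3,k+3) \<notin> S" "(k+3,k+4) \<notin> S" shows "simpl (VV k) S (k+3, 1)"
proof (rule simpl_col)
  show "(k + 3, 1) \<in> VV k" by (simp add: VV_def)
  fix a b assume h: "(a, b) \<in> S" "(k + 3, b) \<in> VV k" "(a, 1) \<in> VV k" "(a, b) \<in> VV k"
  have b: "b = 1 \<or> b = k+3 \<or> b = k+4" using h(2) by (auto simp: VV_def)
  have a: "a = 1 \<or> a = k+3" using h(3) by (auto simp: VV_def)
  show "b = 1" using a b h(1,4) assms by (auto simp: VV_def)
qed

lemma F_u1: "(k+2,k+2) \<notin> S \<Longrightarrow> simpl (VV k) S (k+2, k+3)"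
  by (rule simpl_col) (auto simp: VV_def)

lemma F_u2: "(k+3,k+3) \<notin> S \<Longrightarrow> (k+4,k+3) \<notin> S \<Longrightarrow> simpl (VV k) S (k+2, k+3)"
  by (rule simpl_row) (auto simp: VV_def)

lemma F_x: "(k+3,1) \<notin> S \<Longrightarrow> simpl (VV k) S (k+3, k+4)"
  by (rule simpl_blk[OF blk]) (auto simp: VV_def)

lemma F_y: "(k+2,k+3) \<notin> S \<Longrightarrow> simpl (VV k) S (k+4, k+3)"
  by (rule simpl_blk[OF blk]) (auto simp: VV_def)

lemma F_w: "(k+2,k+3) \<notin> S \<Longrightarrow> (k+3,1) \<notin> S \<Longrightarrow> simpl (VV k) S (k+3, k+3)"
  by (rule simpl_blk[OF blk]) (auto simp: VV_def)


lemma structure_lem: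
  assumes S: "S \<subseteq> VV k" "\<not> HH k \<subseteq> S" "S \<noteq> {}" "\<forall>p\<in>S. \<not> simpl (VV k) S p"
  shows "S = CY k \<or> S = insert (k+3,k+4) (CY k) \<or> S = insert (k+4,k+3) (CY k)"
proof -
  have z: "(k+4,k+4) \<notin> S" using F_z S(4) by blast
  have A: "\<And>i. 1\<le>i \<Longrightarrow> i\<le>k+2 \<Longrightarrow> (i,i)\<in>S \<Longrightarrow> (i,Suc i)\<in>S" using F_D1 S(4) by blast
  have B: "\<And>i. 2\<le>i \<Longrightarrow> i\<le>k+2 \<Longrightarrow> (i,i)\<in>S \<Longrightarrow> (i-1,i)\<in>S" using F_D2 S(4) by blast
  have B1: "(1,1)\<in>S \<Longrightarrow> (k+3,1)\<in>S" using F_D3 S(4) by blast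
  have C1: "\<And>i. 1\<le>i \<Longrightarrow> i\<le>k+1 \<Longrightarrow> (i,Suc i)\<in>S \<Longrightarrow> (i,i)\<in>S" using F_E1 S(4) by blast
  have C2: "\<And>i. 1\<le>i \<Longrightarrow> i\<le>k+1 \<Longrightarrow> (i,Suc i)\<in>S \<Longrightarrow> (Suc i,Suc i)\<in>S" using F_E2 S(4) by blast
  have Dv: "(k+3,1)\<in>S \<Longrightarrow> (1,1)\<in>S" using F_v1 S(4) by blast
  have Du: "(k+2,k+3)\<in>S \<Longrightarrow> (k+2,k+2)\<in>S" using F_u1 S(4) by blast
  have Ex: "(k+3,k+4)\<in>S \<Longrightarrow> (k+3,1)\<in>S" using F_x S(4) by blast
  have Ey: "(k+4,k+3)\<in>S \<Longrightarrow> (k+2,k+3)\<in>S" using F_y S(4) by blast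
  have up: "1 \<le> i \<Longrightarrow> i \<le> k+2 \<Longrightarrow> (i,i)\<in>S" if "(1,1) \<in> S" for i
  proof (induction i)
    case 0 then show ?case by simp
  next
    case (Suc i)
    show ?case
    proof (cases "i = 0")
      case True then show ?thesis using that by simp
    next
      case False
      then have "(i,i) \<in> S" using Suc by simp
      then have "(i, Suc i) \<in> S" using A False Suc by simp
      then show ?thesis using C2 False Suc by simp
    qed
  qed
  have down: "(1,1) \<in> S" if "1 \<le> i" "i \<le> k+2" "(i,i)\<in>S" for i
    using that
  proof (induction i)
    case 0 then show ?case by simp
  next
    case (Suc i)
    show ?case
    proof (cases "i = 0")
      case True then show ?thesis using Suc by simp
    next
      case False
      then have "(i, Suc i) \<in> S" using B[of "Suc i"] Suc by simp
      then have "(i,i) \<in> S" using C1 False Suc by simp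
      then show ?thesis using Suc False by simp
    qed
  qed
  show ?thesis
  proof (cases "(1,1) \<in> S")
    case True
    have Eall: "(i,Suc i) \<in> S" if "1 \<le> i" "i \<le> k+2" for i using A up[OF True] that by blast
    have v: "(k+3,1) \<in> S" using B1 True by blast
    have sub: "CY k - {(k+3,k+3)} \<subseteq> S"
    proof
      fix p assume p: "p \<in> CY k - {(k+3,k+3)}"
      obtain a b where ab: "p = (a,b)" by (cases p)
      from p ab have "(1 \<le> a \<and> a \<le> k+2 \<and> (b = a \<or> b = Suc a)) \<or> (a = k+3 \<and> b = 1)"
        by (auto simp: CY_def VV_def)
      then show "p \<in> S" using up[OF True] Eall v ab by auto
    qed
    have HHsub: "HH k \<subseteq> (CY k - {(k+3,k+3)}) \<union> {(k+3,k+4),(k+4,k+3)}"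
      by (auto simp: HH_def CY_def)
    show ?thesis
    proof (cases "(k+3,k+3) \<in> S")
      case True
      have "CY k \<subseteq> S" using sub True by blast
      moreover have "S \<subseteq> CY k \<union> {(k+3,k+4),(k+4,k+3)}" using S(1) z by (auto simp: CY_def)
      moreover have "\<not> ((k+3,k+4) \<in> S \<and> (k+4,k+3) \<in> S)" using HHsub sub S(2) by blast
      ultimately show ?thesis by blast
    next
      case False
      have x: "(k+3,k+4) \<in> S" using F_v2[OF False] v S(4) by blast
      have "(k+2,k+3) \<in> S" using Eall[of "k+2"] by (simp add: eval_nat_numeral)
      then have y: "(k+4,k+3) \<in> S" using F_u2[OF False] S(4) by blast
      show ?thesis using HHsub sub x y S(2) by blast
    qed
  next
    case False
    have noD: "(i,i) \<notin> S" if "1 \<le> i" "i \<le> k+2" for i using down that False by blast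
    have noE: "(i,Suc i) \<notin> S" if "1 \<le> i" "i \<le> k+2" for i
    proof (cases "i \<le> k+1")
      case True then show ?thesis using C1 noD that by blast
    next
      case False
      then have "i = k+2" using that by simp
      then show ?thesis using Du noD[of "k+2"] by (auto simp: eval_nat_numeral)
    qed
    have nv: "(k+3,1) \<notin> S" using Dv False by blast
    have nu: "(k+2,k+3) \<notin> S" using noE[of "k+2"] by (simp add: eval_nat_numeral)
    have "S \<subseteq> {(k+3,k+3)}"
    proof
      fix p assume p: "p \<in> S"
      obtain a b where ab: "p = (a,b)" by (cases p)
      from p ab S(1) have "(1 \<le> a \<and> a \<le> k+2 \<and> (b = a \<or> b = Suc a)) \<or> (a = k+3 \<and> (b = 1 \<or> b = k+3 \<or> b = k+4))
            \<or> (a = k+4 \<and> (b = k+3 \<or> b = k+4))" by (auto simp: VV_def)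
      then show "p \<in> {(k+3,k+3)}" using noD noE nv nu Ex Ey z p ab by auto
    qed
    then have "S = {(k+3,k+3)}" using S(3) by blast
    then show ?thesis using F_w[OF nu nv] S(4) by blast
  qed
qed


definition goodV :: "(nat\<times>nat) set \<Rightarrow> (nat\<times>nat) set \<Rightarrow> bool" where
 "goodV V S \<longleftrightarrow> (\<exists>T F. T \<subseteq> S \<and> (\<forall>p\<in>T. \<forall>q\<in>T. p \<noteq> q \<longrightarrow> \<not> adjs V p q) \<and> finite F \<and>
     (\<forall>(I,J)\<in>F. I \<times> J \<subseteq> V) \<and> S \<subseteq> (\<Union>(I,J)\<in>F. I \<times> J) \<and> card F \<le> card T)"

lemma good_simpl:
  assumes "finite S" "p \<in> S" "I \<times> J \<subseteq> V" "p \<in> I \<times> J" "\<forall>q\<in>S. adjs V p q \<longrightarrow> q \<in> I \<times> J"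
    "goodV V (S - I \<times> J)"
  shows "goodV V S"
proof -
  obtain T F where TF: "T \<subseteq> S - I \<times> J" "\<forall>p\<in>T. \<forall>q\<in>T. p \<noteq> q \<longrightarrow> \<not> adjs V p q" "finite F"
     "\<forall>(I,J)\<in>F. I \<times> J \<subseteq> V" "S - I \<times> J \<subseteq> (\<Union>(I,J)\<in>F. I \<times> J)" "card F \<le> card T"
    using assms(6) unfolding goodV_def by blast
  have pT: "p \<notin> T" using TF(1) assms(4) by blast
  have fT: "finite T" using TF(1) assms(1) finite_subset by blast
  have c1: "card (insert p T) = card T + 1" using pT fT by simp
  have c2: "card (insert (I,J) F) \<le> card F + 1" using TF(3) by (simp add: card_insert_if)
  have np: "\<not> adjs V p t" if "t \<in> T" for t
    using that assms(5) TF(1) by blast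
  have ind: "\<forall>a\<in>insert p T. \<forall>b\<in>insert p T. a \<noteq> b \<longrightarrow> \<not> adjs V a b"
  proof (intro ballI impI)
    fix a b assume ab: "a \<in> insert p T" "b \<in> insert p T" "a \<noteq> b"
    show "\<not> adjs V a b"
    proof (cases "a = p")
      case True
      then have "b \<in> T" using ab by blast
      then show ?thesis using np True by blast
    next
      case False
      then have a: "a \<in> T" using ab by blast
      show ?thesis
      proof (cases "b = p")
        case True
        then show ?thesis using np[OF a] adjs_sym by metis
      next
        case False
        then have "b \<in> T" using ab by blast
        then show ?thesis using TF(2) a ab(3) by blast
      qed
    qed
  qed
  have s1: "insert p T \<subseteq> S" using TF(1) assms(2) by blast
  have s2: "S \<subseteq> (\<Union>(I',J')\<in>insert (I,J) F. I' \<times> J')" using TF(5) by blast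
  have s3: "\<forall>(I',J')\<in>insert (I,J) F. I' \<times> J' \<subseteq> V" using TF(4) assms(3) by blast
  have s4: "card (insert (I,J) F) \<le> card (insert p T)" using c1 c2 TF(6) by simp
  have s5: "finite (insert (I,J) F)" using TF(3) by simp
  show ?thesis unfolding goodV_def
    by (rule exI[of _ "insert p T"], rule exI[of _ "insert (I,J) F"]) (intro conjI s1 s2 s3 s4 s5 ind)
qed

lemma VV_cases: "(a,b) \<in> VV k \<Longrightarrow> (1\<le>a \<and> a\<le>k+2 \<and> b=a) \<or> (1\<le>a \<and> a\<le>k+2 \<and> b = Suc a) \<or> (a=k+3 \<and> b=1)
   \<or> (a = k+3 \<and> b = k+3) \<or> (a=k+3 \<and> b=k+4) \<or> (a=k+4 \<and> b=k+3) \<or> (a=k+4 \<and> b=k+4)"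
  unfolding VV_def by auto

lemma diag_nonadj: assumes "(i,j) \<in> VV k" "(j,i) \<in> VV k" "i \<le> k+3" "j \<le> k+3" shows "i = j"
  using VV_cases[OF assms(1)] VV_cases[OF assms(2)] assms(3,4) by linarith

lemma CY_off: "(a,b) \<in> CY k \<Longrightarrow> a \<noteq> b \<Longrightarrow> (1\<le>a \<and> a\<le>k+2 \<and> b = Suc a) \<or> (a=k+3 \<and> b=1)"
  unfolding CY_def VV_def by auto

lemma row_lo: "1\<le>a \<Longrightarrow> a\<le>k+2 \<Longrightarrow> (a,b) \<in> VV k \<Longrightarrow> b = a \<or> b = Suc a"
  unfolding VV_def by auto
lemma row_m: "(k+3,b) \<in> VV k \<Longrightarrow> b = 1 \<or> b = k+3 \<or> b = k+4"
  unfolding VV_def by auto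

lemma offdiag_nonadj:
  assumes "(a,b) \<in> CY k" "(c,d) \<in> CY k" "a \<noteq> b" "c \<noteq> d" "(a,d) \<in> VV k" "(c,b) \<in> VV k"
  shows "a = c \<and> b = d"
  using CY_off[OF assms(1,3)] CY_off[OF assms(2,4)]
proof (elim disjE conjE)
  assume h: "1 \<le> a" "a \<le> k + 2" "b = Suc a" "1 \<le> c" "c \<le> k + 2" "d = Suc c"
  show ?thesis using row_lo[OF h(1,2) assms(5)] row_lo[OF h(4,5) assms(6)] h by auto
next
  assume h: "1 \<le> a" "a \<le> k + 2" "b = Suc a" "c = k+3" "d = 1"
  show ?thesis using row_lo[OF h(1,2) assms(5)] row_m[of k b] assms(6) h by auto
next
  assume h: "a = k+3" "b = 1" "1 \<le> c" "c \<le> k + 2" "d = Suc c"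
  show ?thesis using row_lo[OF h(3,4) assms(6)] row_m[of k d] assms(5) h by auto
next
  assume h: "a = k+3" "b = 1" "c = k+3" "d = 1"
  then show ?thesis by simp
qed


lemma CY_E: "(a,b) \<in> CY k \<Longrightarrow> (a,b) \<in> VV k \<and> \<not> (a = k+3 \<and> b = k+4) \<and> \<not> (a = k+4 \<and> b = k+3) \<and> \<not> (a = k+4 \<and> b = k+4)"
  unfolding CY_def by blast

definition DD :: "nat \<Rightarrow> (nat\<times>nat) set" where "DD k = (\<lambda>i. (i,i)) ` {1..k+3}"

lemma DD_card: "card (DD k) = k+3"
  unfolding DD_def by (subst card_image) (auto simp: inj_on_def)

lemma DD_sub: "DD k \<subseteq> CY k"
  by (auto simp: DD_def CY_def VV_def)

lemma DD_ind: "\<forall>p\<in>DD k. \<forall>q\<in>DD k. p \<noteq> q \<longrightarrow> \<not> adjs (VV k) p q"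
proof (intro ballI impI)
  fix p q assume pq: "p \<in> DD k" "q \<in> DD k" "p \<noteq> q"
  obtain i where i: "p = (i,i)" "i \<le> k+3" using pq(1) unfolding DD_def by auto
  obtain j where j: "q = (j,j)" "j \<le> k+3" using pq(2) unfolding DD_def by auto
  have ij: "p = (i,i)" "q = (j,j)" "i \<le> k+3" "j \<le> k+3" "i \<noteq> j" using i j pq(3) by auto
  show "\<not> adjs (VV k) p q"
  proof
    assume "adjs (VV k) p q"
    then have "(i,j) \<in> VV k" "(j,i) \<in> VV k" using ij by (auto simp: adjs_def)
    then show False using diag_nonadj ij by blast
  qed
qed

lemma bounds_xCY: "(a,b) \<in> insert (k+3,k+4) (CY k) \<Longrightarrow> (a,b) \<in> VV k \<and> 1 \<le> a \<and> a \<le> k+3"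
proof -
  assume h: "(a,b) \<in> insert (k+3,k+4) (CY k)"
  show ?thesis
  proof (cases "(a,b) = (k+3,k+4)")
    case True then show ?thesis by (simp add: VV_def)
  next
    case False
    then have "(a,b) \<in> CY k" using h by blast
    note c = CY_E[OF this]
    then show ?thesis using VV_cases[OF conjunct1[OF c]] by linarith
  qed
qed

lemma bounds_yCY: "(a,b) \<in> insert (k+4,k+3) (CY k) \<Longrightarrow> (a,b) \<in> VV k \<and> 1 \<le> b \<and> b \<le> k+3"
proof -
  assume h: "(a,b) \<in> insert (k+4,k+3) (CY k)"
  show ?thesis
  proof (cases "(a,b) = (k+4,k+3)")
    case True then show ?thesis by (simp add: VV_def)
  next
    case False
    then have "(a,b) \<in> CY k" using h by blast
    note c = CY_E[OF this]
    then show ?thesis using VV_cases[OF conjunct1[OF c]] by linarith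
  qed
qed

lemma good_rows:
  assumes "S \<subseteq> insert (k+3,k+4) (CY k)" "DD k \<subseteq> S"
  shows "goodV (VV k) S"
proof -
  let ?F = "(\<lambda>i. ({i}, {b. (i,b) \<in> VV k})) ` {1..k+3}"
  have "card ?F \<le> card {1..k+3}" by (rule card_image_le) simp
  then have c: "card ?F \<le> card (DD k)" by (simp add: DD_card)
  have cov: "S \<subseteq> (\<Union>(I,J)\<in>?F. I \<times> J)"
  proof
    fix p assume "p \<in> S"
    then obtain a b where ab: "p = (a,b)" "(a,b) \<in> insert (k+3,k+4) (CY k)" using assms(1) by (cases p) auto
    note bd = bounds_xCY[OF ab(2)]
    have "({a}, {b. (a,b) \<in> VV k}) \<in> ?F" using bd by auto
    moreover have "p \<in> {a} \<times> {b. (a,b) \<in> VV k}" using ab bd by auto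
    ultimately show "p \<in> (\<Union>(I,J)\<in>?F. I \<times> J)" by blast
  qed
  have r: "\<forall>(I,J)\<in>?F. I \<times> J \<subseteq> VV k" by auto
  show ?thesis unfolding goodV_def
    by (rule exI[of _ "DD k"], rule exI[of _ ?F]) (intro conjI assms(2) DD_ind finite_imageI finite_atLeastAtMost r cov c)
qed

lemma good_cols:
  assumes "S \<subseteq> insert (k+4,k+3) (CY k)" "DD k \<subseteq> S"
  shows "goodV (VV k) S"
proof -
  let ?F = "(\<lambda>j. ({a. (a,j) \<in> VV k}, {j})) ` {1..k+3}"
  have "card ?F \<le> card {1..k+3}" by (rule card_image_le) simp
  then have c: "card ?F \<le> card (DD k)" by (simp add: DD_card)
  have cov: "S \<subseteq> (\<Union>(I,J)\<in>?F. I \<times> J)"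
  proof
    fix p assume "p \<in> S"
    then obtain a b where ab: "p = (a,b)" "(a,b) \<in> insert (k+4,k+3) (CY k)" using assms(1) by (cases p) auto
    note bd = bounds_yCY[OF ab(2)]
    have "({a. (a,b) \<in> VV k}, {b}) \<in> ?F" using bd by auto
    moreover have "p \<in> {a. (a,b) \<in> VV k} \<times> {b}" using ab bd by auto
    ultimately show "p \<in> (\<Union>(I,J)\<in>?F. I \<times> J)" by blast
  qed
  have r: "\<forall>(I,J)\<in>?F. I \<times> J \<subseteq> VV k" by auto
  show ?thesis unfolding goodV_def
    by (rule exI[of _ "DD k"], rule exI[of _ ?F]) (intro conjI assms(2) DD_ind finite_imageI finite_atLeastAtMost r cov c)
qed

lemma finite_VV: "finite (VV k)"
proof -
  have "VV k \<subseteq> {0..k+4} \<times> {0..k+4}" by (auto simp: VV_def)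
  then show ?thesis using finite_subset by blast
qed

lemma good_all: "S \<subseteq> VV k \<Longrightarrow> \<not> HH k \<subseteq> S \<Longrightarrow> goodV (VV k) S"
proof (induction "card S" arbitrary: S rule: less_induct)
  case less
  have fS: "finite S" using less.prems(1) finite_VV finite_subset by blast
  show ?case
  proof (cases "S = {}")
    case True
    then show ?thesis unfolding goodV_def by (intro exI[of _ "{}"] exI[of _ "{}"]) simp
  next
    case ne: False
    show ?thesis
    proof (cases "\<exists>p\<in>S. simpl (VV k) S p")
      case True
      then obtain p I J where p: "p \<in> S" "I \<times> J \<subseteq> VV k" "p \<in> I \<times> J" "\<forall>q\<in>S. adjs (VV k) p q \<longrightarrow> q \<in> I \<times> J"
        unfolding simpl_def by blast
      have "card (S - I \<times> J) < card S" using p(1,3) fS by (intro psubset_card_mono) auto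
      moreover have "S - I \<times> J \<subseteq> VV k" "\<not> HH k \<subseteq> S - I \<times> J" using less.prems by blast+
      ultimately have "goodV (VV k) (S - I \<times> J)" using less.hyps by blast
      then show ?thesis using good_simpl[OF fS p] by blast
    next
      case False
      then have "S = CY k \<or> S = insert (k+3,k+4) (CY k) \<or> S = insert (k+4,k+3) (CY k)"
        using structure_lem[OF less.prems ne] by blast
      then show ?thesis using good_rows good_cols DD_sub by blast
    qed
  qed
qed


definition EE :: "(nat\<times>nat) set \<Rightarrow> nat\<times>nat \<Rightarrow> nat\<times>nat \<Rightarrow> bool" where
  "EE V p q \<longleftrightarrow> p \<noteq> q \<and> adjs V p q"

lemma rect_clique: "I \<times> J \<subseteq> V \<Longrightarrow> K \<subseteq> I \<times> J \<Longrightarrow> is_clique K (EE V)"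
  unfolding is_clique_def EE_def adjs_def by (auto simp: subset_iff mem_Times_iff)

lemma clique_mono: "finite S \<Longrightarrow> S' \<subseteq> S \<Longrightarrow> clique_num S' E \<le> clique_num S E"
proof -
  assume a: "finite S" "S' \<subseteq> S"
  then have "finite S'" using finite_subset by blast
  then obtain K where "K \<subseteq> S'" "is_clique K E" "card K = clique_num S' E" using clique_facts(1) by blast
  then show ?thesis using clique_facts(2)[OF a(1), of K E] a(2) by simp
qed

lemma col_simpl:
  assumes "finite S" "p \<in> S" "I \<times> J \<subseteq> V" "p \<in> I \<times> J" "\<forall>q\<in>S. adjs V p q \<longrightarrow> q \<in> I \<times> J"
    "colouring (S - {p}) (EE V) (clique_num (S-{p}) (EE V)) f"
  shows "\<exists>g. colouring S (EE V) (clique_num S (EE V)) g"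
proof -
  let ?w = "clique_num S (EE V)"
  have w': "clique_num (S-{p}) (EE V) \<le> ?w" using clique_mono[OF assms(1)] by blast
  let ?N = "{q \<in> S - {p}. adjs V p q}"
  have Nsub: "insert p ?N \<subseteq> S" "insert p ?N \<subseteq> I \<times> J" using assms(2,4,5) by auto
  have cl: "is_clique (insert p ?N) (EE V)" using rect_clique[OF assms(3) Nsub(2)] .
  have fin: "finite ?N" using assms(1) by simp
  have "card (insert p ?N) \<le> ?w" using clique_facts(2)[OF assms(1) Nsub(1) cl] .
  then have cN: "card ?N < ?w" using fin by simp
  have "card (f ` ?N) < ?w" using card_image_le[OF fin, of f] cN by linarith
  then obtain c where c: "c < ?w" "c \<notin> f ` ?N"
  proof -
    assume r: "\<And>c. c < ?w \<Longrightarrow> c \<notin> f ` ?N \<Longrightarrow> thesis"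
    show thesis
    proof (rule ccontr)
      assume "\<not> thesis"
      then have "{..<?w} \<subseteq> f ` ?N" using r by blast
      then have "card {..<?w} \<le> card (f ` ?N)" using fin by (intro card_mono) auto
      then show False using \<open>card (f ` ?N) < ?w\<close> by simp
    qed
  qed
  define g where "g = f(p := c)"
  have fc: "\<forall>x\<in>S-{p}. f x < clique_num (S-{p}) (EE V)"
     "\<forall>x\<in>S-{p}. \<forall>y\<in>S-{p}. x \<noteq> y \<longrightarrow> EE V x y \<longrightarrow> f x \<noteq> f y"
    using assms(6) unfolding colouring_def by blast+
  have "colouring S (EE V) ?w g"
    unfolding colouring_def
  proof (intro conjI ballI impI)
    fix x assume "x \<in> S"
    show "g x < ?w"
    proof (cases "x = p")
      case True then show ?thesis using c(1) by (simp add: g_def)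
    next
      case False
      then have "f x < clique_num (S-{p}) (EE V)" using fc(1) \<open>x \<in> S\<close> by blast
      then show ?thesis using False w' by (simp add: g_def)
    qed
  next
    fix x y assume xy: "x \<in> S" "y \<in> S" "x \<noteq> y" "EE V x y"
    show "g x \<noteq> g y"
    proof (cases "x = p")
      case True
      then have "y \<in> ?N" using xy by (auto simp: EE_def)
      then show ?thesis using True xy(3) c(2) by (auto simp: g_def)
    next
      case False
      show ?thesis
      proof (cases "y = p")
        case True
        then have "x \<in> ?N" using xy adjs_sym by (auto simp: EE_def)
        then show ?thesis using True xy(3) c(2) by (auto simp: g_def)
      next
        case False
        then show ?thesis using \<open>x \<noteq> p\<close> fc(2) xy by (auto simp: g_def)
      qed
    qed
  qed
  then show ?thesis by blast
qed

definition f0 :: "nat \<Rightarrow> nat\<times>nat \<Rightarrow> nat" where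
  "f0 k p = (if p = (k+3,k+4) \<or> p = (k+4,k+3) then 2 else if fst p = snd p then 0 else 1)"

lemma CY_diag_bound: "(i,i) \<in> CY k \<Longrightarrow> i \<le> k+3"
  using CY_E[of i i k] VV_cases[of i i k] by linarith

lemma f0_CY:
  assumes "p \<in> CY k" "q \<in> CY k" "p \<noteq> q" "adjs (VV k) p q"
  shows "f0 k p \<noteq> f0 k q"
proof -
  obtain a b c d where ab: "p = (a,b)" "q = (c,d)" by (cases p, cases q)
  have nx: "p \<noteq> (k+3,k+4)" "p \<noteq> (k+4,k+3)" "q \<noteq> (k+3,k+4)" "q \<noteq> (k+4,k+3)"
    using assms(1,2) by (auto simp: CY_def)
  have ad: "(a,d) \<in> VV k" "(c,b) \<in> VV k" using assms(4) ab by (auto simp: adjs_def)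
  show ?thesis
  proof
    assume eq: "f0 k p = f0 k q"
    show False
    proof (cases "a = b")
      case True
      then have "c = d" using eq nx ab by (auto simp: f0_def split: if_splits)
      then have "a = c" using diag_nonadj[of a c k] ad True ab assms(1,2) CY_diag_bound by metis
      then show False using True \<open>c = d\<close> ab assms(3) by simp
    next
      case False
      then have "c \<noteq> d" using eq nx ab by (auto simp: f0_def split: if_splits)
      then show False using offdiag_nonadj[of a b k c d] ab assms(1,2,3) ad False by auto
    qed
  qed
qed

lemma spec_col:
  assumes "S = CY k \<or> S = insert (k+3,k+4) (CY k) \<or> S = insert (k+4,k+3) (CY k)"
  shows "\<exists>g. colouring S (EE (VV k)) (clique_num S (EE (VV k))) g"
proof -
  have fS: "finite S" using assms finite_VV[of k] unfolding CY_def by (auto intro: finite_subset)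
  have pr: "\<forall>x\<in>S. \<forall>y\<in>S. x \<noteq> y \<longrightarrow> EE (VV k) x y \<longrightarrow> f0 k x \<noteq> f0 k y"
  proof (intro ballI impI)
    fix x y assume xy: "x \<in> S" "y \<in> S" "x \<noteq> y" "EE (VV k) x y"
    show "f0 k x \<noteq> f0 k y"
    proof (cases "x \<in> CY k \<and> y \<in> CY k")
      case True
      then show ?thesis using f0_CY xy by (auto simp: EE_def)
    next
      case False
      have nx: "\<forall>q\<in>CY k. q \<noteq> (k+3,k+4) \<and> q \<noteq> (k+4,k+3)" by (auto simp: CY_def)
      have "f0 k q < 2" if "q \<in> CY k" for q using nx that by (auto simp: f0_def)
      moreover have "(x \<notin> CY k \<and> y \<in> CY k) \<or> (x \<in> CY k \<and> y \<notin> CY k)"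
        using False xy assms by auto
      moreover have "f0 k q = 2" if "q \<in> S" "q \<notin> CY k" for q using that assms by (auto simp: f0_def)
      ultimately show ?thesis using xy by (metis less_irrefl)
    qed
  qed
  show ?thesis
  proof (cases "S = CY k")
    case True
    have "{1} \<times> {1,2} \<subseteq> VV k" by (auto simp: VV_def)
    then have cl: "is_clique ({1} \<times> {1,2}) (EE (VV k))" by (rule rect_clique) simp
    have "{1} \<times> {1,2} \<subseteq> S" using True by (auto simp: CY_def VV_def)
    then have "card ({1::nat} \<times> {1::nat,2}) \<le> clique_num S (EE (VV k))" using clique_facts(2)[OF fS _ cl] by blast
    then have w: "2 \<le> clique_num S (EE (VV k))" by simp
    have "\<forall>x\<in>S. f0 k x < 2" using True by (auto simp: CY_def f0_def)
    then have "colouring S (EE (VV k)) 2 (f0 k)" using pr unfolding colouring_def by blast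
    then show ?thesis using colouring_mono[OF w] by blast
  next
    case False
    then have S2: "S = insert (k+3,k+4) (CY k) \<or> S = insert (k+4,k+3) (CY k)" using assms by blast
    have "3 \<le> clique_num S (EE (VV k))"
    proof (cases "S = insert (k+3,k+4) (CY k)")
      case True
      let ?K = "{k+3} \<times> {1,k+3,k+4}"
      have "?K \<subseteq> VV k" by (auto simp: VV_def)
      then have cl: "is_clique ?K (EE (VV k))" by (rule rect_clique) simp
      have "?K \<subseteq> S" using True by (auto simp: CY_def VV_def)
      then have "card ?K \<le> clique_num S (EE (VV k))" using clique_facts(2)[OF fS _ cl] by blast
      moreover have "card ?K = 3" by simp
      ultimately show ?thesis by simp
    next
      case False
      then have T: "S = insert (k+4,k+3) (CY k)" using S2 by blast
      let ?K = "{k+2,k+3,k+4} \<times> {k+3}"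
      have "?K \<subseteq> VV k" by (auto simp: VV_def)
      then have cl: "is_clique ?K (EE (VV k))" by (rule rect_clique) simp
      have "?K \<subseteq> S" using T by (auto simp: CY_def VV_def)
      then have "card ?K \<le> clique_num S (EE (VV k))" using clique_facts(2)[OF fS _ cl] by blast
      moreover have "card ?K = 3" by simp
      ultimately show ?thesis by simp
    qed
    moreover have "\<forall>x\<in>S. f0 k x < 3" by (auto simp: f0_def)
    then have "colouring S (EE (VV k)) 3 (f0 k)" using pr unfolding colouring_def by blast
    ultimately show ?thesis using colouring_mono by blast
  qed
qed

lemma col_all: "S \<subseteq> VV k \<Longrightarrow> \<not> HH k \<subseteq> S \<Longrightarrow> \<exists>g. colouring S (EE (VV k)) (clique_num S (EE (VV k))) g"
proof (induction "card S" arbitrary: S rule: less_induct)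
  case less
  have fS: "finite S" using less.prems(1) finite_VV finite_subset by blast
  show ?case
  proof (cases "S = {}")
    case True
    then show ?thesis unfolding colouring_def by simp
  next
    case ne: False
    show ?thesis
    proof (cases "\<exists>p\<in>S. simpl (VV k) S p")
      case True
      then obtain p I J where p: "p \<in> S" "I \<times> J \<subseteq> VV k" "p \<in> I \<times> J" "\<forall>q\<in>S. adjs (VV k) p q \<longrightarrow> q \<in> I \<times> J"
        unfolding simpl_def by blast
      have "card (S - {p}) < card S" using p(1) fS by (intro psubset_card_mono) auto
      moreover have "S - {p} \<subseteq> VV k" "\<not> HH k \<subseteq> S - {p}" using less.prems by blast+
      ultimately obtain f where "colouring (S - {p}) (EE (VV k)) (clique_num (S - {p}) (EE (VV k))) f"
        using less.hyps by blast
      then show ?thesis using col_simpl[OF fS p] by blast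
    next
      case False
      then have "S = CY k \<or> S = insert (k+3,k+4) (CY k) \<or> S = insert (k+4,k+3) (CY k)"
        using structure_lem[OF less.prems ne] by blast
      then show ?thesis by (rule spec_col)
    qed
  qed
qed


definition hh :: "nat \<Rightarrow> nat \<Rightarrow> nat\<times>nat" where
  "hh k j = (if j < 2*k+4 then (j div 2 + 1, j div 2 + 1 + j mod 2)
             else if j = 2*k+4 then (k+4,k+3) else if j = 2*k+5 then (k+3,k+4) else (k+3,1))"

lemma hh_in: "j \<le> 2*k+6 \<Longrightarrow> hh k j \<in> HH k"
proof -
  assume j: "j \<le> 2*k+6"
  show ?thesis
  proof (cases "j < 2*k+4")
    case True
    obtain i where "j = 2*i \<or> j = 2*i+1" by (metis dvd_mult_div_cancel mod_eq_0_iff_dvd odd_two_times_div_two_succ)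
    then show ?thesis using True unfolding hh_def HH_def VV_def by auto
  next
    case False
    then show ?thesis using j unfolding hh_def HH_def VV_def by auto
  qed
qed

lemma hh_onto: "p \<in> HH k \<Longrightarrow> \<exists>j\<le>2*k+6. hh k j = p"
proof -
  assume p: "p \<in> HH k"
  obtain a b where ab: "p = (a,b)" by (cases p)
  have "(1 \<le> a \<and> a \<le> k+2 \<and> b = a) \<or> (1 \<le> a \<and> a \<le> k+2 \<and> b = Suc a) \<or> (a = k+3 \<and> b = 1) \<or>
        (a = k+3 \<and> b = k+4) \<or> (a = k+4 \<and> b = k+3)"
    using p ab unfolding HH_def VV_def by auto
  then show ?thesis
  proof (elim disjE conjE)
    assume h: "1 \<le> a" "a \<le> k+2" "b = a"
    have "hh k (2*(a-1)) = p" using h ab unfolding hh_def by auto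
    then show ?thesis using h by (intro exI[of _ "2*(a-1)"]) auto
  next
    assume h: "1 \<le> a" "a \<le> k+2" "b = Suc a"
    have "hh k (2*(a-1)+1) = p" using h ab unfolding hh_def by auto
    then show ?thesis using h by (intro exI[of _ "2*(a-1)+1"]) auto
  next
    assume h: "a = k+3" "b = 1"
    have "hh k (2*k+6) = p" using h ab unfolding hh_def by auto
    then show ?thesis by (intro exI[of _ "2*k+6"]) auto
  next
    assume h: "a = k+3" "b = k+4"
    have "hh k (2*k+5) = p" using h ab unfolding hh_def by auto
    then show ?thesis by (intro exI[of _ "2*k+5"]) auto
  next
    assume h: "a = k+4" "b = k+3"
    have "hh k (2*k+4) = p" using h ab unfolding hh_def by auto
    then show ?thesis by (intro exI[of _ "2*k+4"]) auto
  qed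
qed

lemma hh_inj: "inj_on (hh k) {..2*k+6}"
proof (rule inj_onI)
  fix i j assume ij: "i \<in> {..2*k+6}" "j \<in> {..2*k+6}" "hh k i = hh k j"
  show "i = j"
  proof (cases "i < 2*k+4")
    case True
    show ?thesis
    proof (cases "j < 2*k+4")
      case True
      then have "i div 2 = j div 2" "i mod 2 = j mod 2" using ij(3) \<open>i < 2*k+4\<close> unfolding hh_def by auto
      then show ?thesis by (metis div_mult_mod_eq)
    next
      case False
      then show ?thesis using ij True unfolding hh_def by (auto split: if_splits)
    qed
  next
    case False
    then show ?thesis using ij unfolding hh_def by (auto split: if_splits)
  qed
qed

lemma HH_img: "HH k = hh k ` {..2*k+6}"
proof
  show "HH k \<subseteq> hh k ` {..2*k+6}"
  proof
    fix p assume "p \<in> HH k"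
    then obtain j where "j \<le> 2*k+6" "hh k j = p" using hh_onto by blast
    then show "p \<in> hh k ` {..2*k+6}" by force
  qed
  show "hh k ` {..2*k+6} \<subseteq> HH k" using hh_in by auto
qed

lemma card_HH: "card (HH k) = 2*k+7"
  using card_image[OF hh_inj[of k]] HH_img[of k] by simp

lemma hh_adj: "j < 2*k+6 \<Longrightarrow> adjs (VV k) (hh k j) (hh k (Suc j))"
proof -
  assume j: "j < 2*k+6"
  obtain i where i: "j = 2*i \<or> j = 2*i+1" by (metis dvd_mult_div_cancel mod_eq_0_iff_dvd odd_two_times_div_two_succ)
  consider "j < 2*k+3" | "j = 2*k+3" | "j = 2*k+4" | "j = 2*k+5" using j by linarith
  then show ?thesis
  proof cases
    case 1
    then show ?thesis using i unfolding hh_def adjs_def VV_def by auto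
  next
    case 2
    then show ?thesis unfolding hh_def adjs_def VV_def by auto
  next
    case 3
    then show ?thesis unfolding hh_def adjs_def VV_def by auto
  next
    case 4
    then show ?thesis unfolding hh_def adjs_def VV_def by auto
  qed
qed

lemma hh_adj_last: "adjs (VV k) (hh k (2*k+6)) (hh k 0)"
  unfolding hh_def adjs_def VV_def by auto


lemma row_n: "(k+4,b) \<in> VV k \<Longrightarrow> b = k+3 \<or> b = k+4"
  unfolding VV_def by auto

lemma row_kind: "(a,b) \<in> VV k \<Longrightarrow> (1 \<le> a \<and> a \<le> k+2) \<or> a = k+3 \<or> a = k+4"
  unfolding VV_def by auto

lemma two_by_two_aux:
  assumes "a \<noteq> a'" "b \<noteq> b'" "(a,b) \<in> VV k" "(a,b') \<in> VV k" "(a',b) \<in> VV k" "(a',b') \<in> VV k"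
  shows "k+3 \<le> a \<and> k+3 \<le> b"
proof -
  consider "1 \<le> a \<and> a \<le> k+2" | "a = k+3" | "a = k+4" using row_kind[OF assms(3)] by blast
  note ca = this
  consider "1 \<le> a' \<and> a' \<le> k+2" | "a' = k+3" | "a' = k+4" using row_kind[OF assms(5)] by blast
  note ca' = this
  show ?thesis
  proof (cases rule: ca)
    case 1
    note r1 = row_lo[of a k b] row_lo[of a k b'] 
    show ?thesis
    proof (cases rule: ca')
      case 1
      then show ?thesis using row_lo[of a k b] row_lo[of a k b'] row_lo[of a' k b] row_lo[of a' k b'] assms \<open>1 \<le> a \<and> a \<le> k+2\<close> by linarith
    next
      case 2
      then show ?thesis using row_lo[of a k b] row_lo[of a k b'] row_m[of k b] row_m[of k b'] assms \<open>1 \<le> a \<and> a \<le> k+2\<close> by auto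
    next
      case 3
      then show ?thesis using row_lo[of a k b] row_lo[of a k b'] row_n[of k b] row_n[of k b'] assms \<open>1 \<le> a \<and> a \<le> k+2\<close> by auto
    qed
  next
    case 2
    show ?thesis
    proof (cases rule: ca')
      case 1
      then show ?thesis using row_lo[of a' k b] row_lo[of a' k b'] row_m[of k b] row_m[of k b'] assms \<open>a = k+3\<close> by auto
    next
      case 2
      then show ?thesis using assms \<open>a = k+3\<close> by simp
    next
      case 3
      then show ?thesis using row_n[of k b] assms \<open>a = k+3\<close> by auto
    qed
  next
    case 3
    then show ?thesis using row_n[of k b] assms by auto
  qed
qed

lemma card2: "card {a,b} \<le> 2"
  by (cases "a = b") auto

lemma HH_row: "\<exists>c1 c2. {b. (r,b) \<in> HH k} \<subseteq> {c1,c2}"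
proof -
  consider "1 \<le> r \<and> r \<le> k+2" | "r = k+3" | "r = k+4" | "\<not> (1 \<le> r \<and> r \<le> k+4)" by linarith
  then show ?thesis
  proof cases
    case 1 then show ?thesis by (intro exI[of _ r] exI[of _ "Suc r"]) (auto simp: HH_def VV_def)
  next
    case 2 then show ?thesis by (intro exI[of _ 1] exI[of _ "k+4"]) (auto simp: HH_def VV_def)
  next
    case 3 then show ?thesis by (intro exI[of _ "k+3"] exI[of _ "k+3"]) (auto simp: HH_def VV_def)
  next
    case 4 then show ?thesis by (intro exI[of _ 0] exI[of _ 0]) (auto simp: HH_def VV_def)
  qed
qed

lemma HH_col: "\<exists>c1 c2. {a. (a,c) \<in> HH k} \<subseteq> {c1,c2}"
proof -
  consider "c = 1" | "2 \<le> c \<and> c \<le> k+2" | "c = k+3" | "c = k+4" | "\<not> (1 \<le> c \<and> c \<le> k+4)" by linarith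
  then show ?thesis
  proof cases
    case 1 then show ?thesis by (intro exI[of _ 1] exI[of _ "k+3"]) (auto simp: HH_def VV_def)
  next
    case 2 then show ?thesis by (intro exI[of _ "c-1"] exI[of _ c]) (auto simp: HH_def VV_def)
  next
    case 3 then show ?thesis by (intro exI[of _ "k+2"] exI[of _ "k+4"]) (auto simp: HH_def VV_def)
  next
    case 4 then show ?thesis by (intro exI[of _ "k+3"] exI[of _ "k+3"]) (auto simp: HH_def VV_def)
  next
    case 5 then show ?thesis by (intro exI[of _ 0] exI[of _ 0]) (auto simp: HH_def VV_def)
  qed
qed

lemma finite_HH: "finite (HH k)"
  unfolding HH_def using finite_VV by blast

lemma rect_HH:
  assumes "I \<times> J \<subseteq> VV k"
  shows "card (I \<times> J \<inter> HH k) \<le> 2"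
proof -
  let ?P = "I \<times> J \<inter> HH k"
  have fP: "finite ?P" using finite_HH by blast
  show ?thesis
  proof (cases "\<exists>r. \<forall>p\<in>?P. fst p = r")
    case True
    then obtain r where r: "\<forall>p\<in>?P. fst p = r" by blast
    obtain c1 c2 where c: "{b. (r,b) \<in> HH k} \<subseteq> {c1,c2}" using HH_row by blast
    have "?P \<subseteq> {(r,c1),(r,c2)}"
    proof
      fix p assume p: "p \<in> ?P"
      have "fst p = r" using r p by blast
      then have e: "p = (r, snd p)" by (cases p) simp
      then have "(r, snd p) \<in> HH k" using p by auto
      then have "snd p \<in> {c1,c2}" using c by blast
      then show "p \<in> {(r,c1),(r,c2)}" using e by auto
    qed
    then show ?thesis using card_mono[of "{(r,c1),(r,c2)}" ?P] card2[of "(r,c1)" "(r,c2)"] by simp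
  next
    case F1: False
    show ?thesis
    proof (cases "\<exists>c. \<forall>p\<in>?P. snd p = c")
      case True
      then obtain c where r: "\<forall>p\<in>?P. snd p = c" by blast
      obtain c1 c2 where cc: "{a. (a,c) \<in> HH k} \<subseteq> {c1,c2}" using HH_col by blast
      have "?P \<subseteq> {(c1,c),(c2,c)}"
      proof
        fix p assume p: "p \<in> ?P"
        have "snd p = c" using r p by blast
        then have e: "p = (fst p, c)" by (cases p) simp
        then have "(fst p, c) \<in> HH k" using p by auto
        then have "fst p \<in> {c1,c2}" using cc by blast
        then show "p \<in> {(c1,c),(c2,c)}" using e by auto
      qed
      then show ?thesis using card_mono[of "{(c1,c),(c2,c)}" ?P] card2[of "(c1,c)" "(c2,c)"] by simp
    next
      case False
      have "?P \<noteq> {}" using F1 by blast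
      then obtain p where p: "p \<in> ?P" by blast
      obtain q where q: "q \<in> ?P" "fst q \<noteq> fst p" using F1 by blast
      obtain s where s: "s \<in> ?P" "snd s \<noteq> snd p" using False by blast
      have pq: "p \<in> ?P" "q \<in> ?P" "fst p \<noteq> fst q" using p q by auto
      have rs: "p \<in> ?P" "s \<in> ?P" "snd p \<noteq> snd s" using p s by auto
      have "?P \<subseteq> {(k+3,k+4),(k+4,k+3)}"
      proof
        fix t assume t: "t \<in> ?P"
        obtain a' where a': "a' \<in> I" "a' \<noteq> fst t"
          using pq t by (cases "fst p = fst t") (auto simp: mem_Times_iff)
        obtain b' where b': "b' \<in> J" "b' \<noteq> snd t"
          using rs t by (cases "snd p = snd t") (auto simp: mem_Times_iff)
        have tI: "fst t \<in> I" "snd t \<in> J" using t by (auto simp: mem_Times_iff)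
        have "(fst t, snd t) \<in> VV k" "(fst t, b') \<in> VV k" "(a', snd t) \<in> VV k" "(a', b') \<in> VV k"
          using assms tI a' b' by blast+
        then have "k+3 \<le> fst t \<and> k+3 \<le> snd t" using two_by_two_aux[of "fst t" a' "snd t" b' k] a' b' by metis
        moreover have "t \<in> VV k" "t \<noteq> (k+3,k+3)" "t \<noteq> (k+4,k+4)" using t by (auto simp: HH_def)
        moreover have "fst t \<le> k+4" "snd t \<le> k+4" using \<open>t \<in> VV k\<close> by (cases t, simp add: VV_def, linarith)+
        ultimately show "t \<in> {(k+3,k+4),(k+4,k+3)}" by (cases t) auto
      qed
      then show ?thesis using card_mono[of "{(k+3,k+4),(k+4,k+3)}" ?P] card2[of "(k+3,k+4)" "(k+4,k+3)"] by simp
    qed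
  qed
qed

lemma clique_HH:
  assumes "K \<subseteq> HH k" "is_clique K (EE (VV k))"
  shows "card K \<le> 2"
proof -
  have KV: "K \<subseteq> VV k" using assms(1) by (auto simp: HH_def)
  have "fst ` K \<times> snd ` K \<subseteq> VV k"
  proof
    fix z assume "z \<in> fst ` K \<times> snd ` K"
    then obtain p q where pq: "p \<in> K" "q \<in> K" "z = (fst p, snd q)" by auto
    show "z \<in> VV k"
    proof (cases "p = q")
      case True then show ?thesis using pq KV by auto
    next
      case False
      then have "adjs (VV k) p q" using assms(2) pq unfolding is_clique_def EE_def by blast
      then show ?thesis using pq by (simp add: adjs_def)
    qed
  qed
  then have "card (fst ` K \<times> snd ` K \<inter> HH k) \<le> 2" by (rule rect_HH)
  moreover have "K \<subseteq> fst ` K \<times> snd ` K \<inter> HH k" using assms(1) by force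
  moreover have "finite (fst ` K \<times> snd ` K \<inter> HH k)" using finite_HH by blast
  ultimately show ?thesis using card_mono by (metis le_trans)
qed

lemma hh_ne: "j < 2*k+6 \<Longrightarrow> hh k j \<noteq> hh k (Suc j)"
  using hh_inj[of k] unfolding inj_on_def by (metis Suc_n_not_n atMost_iff less_eq_Suc_le nat_less_le)

lemma hh_ne_last: "hh k (2*k+6) \<noteq> hh k 0"
  using hh_inj[of k] unfolding inj_on_def by (metis atMost_iff le0 order_refl add_is_0 zero_neq_numeral)

lemma no2col: "\<not> colouring (HH k) (EE (VV k)) 2 f"
proof
  assume col: "colouring (HH k) (EE (VV k)) 2 f"
  have lt: "f (hh k j) < 2" if "j \<le> 2*k+6" for j using col hh_in[OF that] unfolding colouring_def by blast
  have df: "f (hh k j) \<noteq> f (hh k (Suc j))" if "j < 2*k+6" for j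
    using col hh_in[of j k] hh_in[of "Suc j" k] that hh_adj[OF that] hh_ne[OF that]
    unfolding colouring_def EE_def by auto
  have par: "j \<le> 2*k+6 \<Longrightarrow> f (hh k j) = (f (hh k 0) + j) mod 2" for j
  proof (induction j)
    case 0 then show ?case using lt[of 0] by simp
  next
    case (Suc j)
    then have "f (hh k j) = (f (hh k 0) + j) mod 2" by (simp add: Suc.IH)
    moreover have "f (hh k (Suc j)) < 2" using lt Suc by blast
    moreover have "f (hh k j) \<noteq> f (hh k (Suc j))" using Suc.prems by (intro df) linarith
    ultimately show ?case by presburger
  qed
  have "f (hh k (2*k+6)) = f (hh k 0)" using par[of "2*k+6"] lt[of 0] by presburger
  moreover have "f (hh k (2*k+6)) \<noteq> f (hh k 0)"
    using col hh_in[of "2*k+6" k] hh_in[of 0 k] hh_adj_last[of k] hh_ne_last[of k]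
    unfolding colouring_def EE_def by auto
  ultimately show False by simp
qed


lemma smod_inj: "inj_on (\<lambda>j. Suc j mod (2*k+7)) {..2*k+6}"
proof (rule inj_onI)
  fix i j assume ij: "i \<in> {..2*k+6}" "j \<in> {..2*k+6}" "Suc i mod (2*k+7) = Suc j mod (2*k+7)"
  have mi: "Suc i mod (2*k+7) = (if i = 2*k+6 then 0 else Suc i)" using ij(1) by (auto simp: add.commute)
  have mj: "Suc j mod (2*k+7) = (if j = 2*k+6 then 0 else Suc j)" using ij(2) by (auto simp: add.commute)
  show "i = j" using ij(3) mi mj by (auto split: if_splits)
qed

lemma indep_count:
  assumes "T \<subseteq> HH k" "\<forall>p\<in>T. \<forall>q\<in>T. p \<noteq> q \<longrightarrow> \<not> adjs (VV k) p q"
    "\<forall>j\<le>2*k+6. hh k j \<in> T \<longrightarrow> j \<le> B" "B \<le> 2*k+6"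
  shows "2 * card T \<le> min (B+1) (2*k+6) + 1"
proof -
  let ?K = "{j. j \<le> B \<and> hh k j \<in> T}"
  let ?s = "\<lambda>j. Suc j mod (2*k+7)"
  let ?M = "min (B+1) (2*k+6)"
  have TK: "T = hh k ` ?K"
  proof
    show "T \<subseteq> hh k ` ?K"
    proof
      fix p assume p: "p \<in> T"
      then obtain j where j: "j \<le> 2*k+6" "hh k j = p" using assms(1) hh_onto by blast
      then have "j \<le> B" using assms(3) p by blast
      then show "p \<in> hh k ` ?K" using j p by blast
    qed
  qed auto
  have Ksub: "?K \<subseteq> {..2*k+6}" using assms(4) by auto
  have cT: "card T = card ?K" using TK card_image[OF inj_on_subset[OF hh_inj Ksub]] by simp
  have fK: "finite ?K" by simp
  have disj: "?K \<inter> ?s ` ?K = {}"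
  proof (rule ccontr)
    assume "?K \<inter> ?s ` ?K \<noteq> {}"
    then obtain j where j: "j \<in> ?K" "?s j \<in> ?K" by blast
    show False
    proof (cases "j = 2*k+6")
      case True
      then have "?s j = 0" by (simp add: add.commute)
      then have "hh k 0 \<in> T" "hh k (2*k+6) \<in> T" using j True by auto
      then show False using assms(2) hh_adj_last[of k] hh_ne_last[of k] by blast
    next
      case False
      then have jl: "j < 2*k+6" using j Ksub by auto
      then have "?s j = Suc j" by simp
      then have "hh k (Suc j) \<in> T" "hh k j \<in> T" using j by auto
      then show False using assms(2) hh_adj[OF jl] hh_ne[OF jl] by blast
    qed
  qed
  have U: "?K \<union> ?s ` ?K \<subseteq> {..?M}"
  proof
    fix i assume "i \<in> ?K \<union> ?s ` ?K"
    then show "i \<in> {..?M}"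
    proof
      assume "i \<in> ?K" then show ?thesis using assms(4) by auto
    next
      assume "i \<in> ?s ` ?K"
      then obtain j where j: "j \<le> B" "i = ?s j" by blast
      show ?thesis
      proof (cases "j = 2*k+6")
        case True then show ?thesis using j by (simp add: add.commute)
      next
        case False then have "i = Suc j" using j assms(4) by simp
        then show ?thesis using j assms(4) False by simp
      qed
    qed
  qed
  have "card (?s ` ?K) = card ?K" using card_image[OF inj_on_subset[OF smod_inj Ksub]] .
  then have "card (?K \<union> ?s ` ?K) = 2 * card ?K" using card_Un_disjoint[OF fK finite_imageI[OF fK] disj] by simp
  moreover have "card (?K \<union> ?s ` ?K) \<le> ?M + 1" using card_mono[OF _ U] by simp
  ultimately show ?thesis using cT by simp
qed

lemma HH_sub: "HH k \<subseteq> VV k" by (auto simp: HH_def)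

lemma iso_bound:
  assumes "T \<subseteq> VV k - {(k+4,k+4)}" "\<forall>p\<in>T. \<forall>q\<in>T. p \<noteq> q \<longrightarrow> \<not> adjs (VV k) p q"
  shows "card T \<le> k+3"
proof (cases "(k+3,k+3) \<in> T")
  case False
  then have "T \<subseteq> HH k" using assms(1) by (auto simp: HH_def)
  then have "2 * card T \<le> min (2*k+6+1) (2*k+6) + 1" using indep_count[of T k "2*k+6"] assms(2) by auto
  then show ?thesis by simp
next
  case True
  let ?T = "T - {(k+3,k+3)}"
  have T1: "?T \<subseteq> HH k" using assms(1) by (auto simp: HH_def)
  have ind: "\<forall>p\<in>?T. \<forall>q\<in>?T. p \<noteq> q \<longrightarrow> \<not> adjs (VV k) p q" using assms(2) by blast
  have h3: "hh k (2*k+3) = (k+2,k+3)"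
  proof -
    have "(2*k+3) div 2 = k+1" "(2*k+3) mod 2 = 1" by presburger+
    then show ?thesis unfolding hh_def by simp
  qed
  have h4: "hh k (2*k+4) = (k+4,k+3)" unfolding hh_def by simp
  have h5: "hh k (2*k+5) = (k+3,k+4)" unfolding hh_def by simp
  have h6: "hh k (2*k+6) = (k+3,1)" unfolding hh_def by simp
  have w: "adjs (VV k) (k+3,k+3) (hh k j)" if "2*k+3 \<le> j" "j \<le> 2*k+6" for j
  proof -
    have "j = 2*k+3 \<or> j = 2*k+4 \<or> j = 2*k+5 \<or> j = 2*k+6" using that by presburger
    moreover have "adjs (VV k) (k+3,k+3) (k+2,k+3)" "adjs (VV k) (k+3,k+3) (k+4,k+3)"
      "adjs (VV k) (k+3,k+3) (k+3,k+4)" "adjs (VV k) (k+3,k+3) (k+3,1)"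
      by (simp_all add: adjs_def VV_def)
    ultimately show ?thesis using h3 h4 h5 h6 by auto
  qed
  have jb: "\<forall>j\<le>2*k+6. hh k j \<in> ?T \<longrightarrow> j \<le> 2*k+2"
  proof (intro allI impI)
    fix j assume j: "j \<le> 2*k+6" "hh k j \<in> ?T"
    show "j \<le> 2*k+2"
    proof (rule ccontr)
      assume "\<not> j \<le> 2*k+2"
      then have "adjs (VV k) (k+3,k+3) (hh k j)" using w j by simp
      moreover have ne: "(k+3,k+3) \<noteq> hh k j" using j by auto
      moreover have hT: "hh k j \<in> T" using j by blast
      ultimately show False using assms(2)[rule_format, OF True hT ne] by blast
    qed
  qed
  have "2*k+2 \<le> 2*k+6" by simp
  from indep_count[OF T1 ind jb this] have "2 * card ?T \<le> min (2*k+2+1) (2*k+6) + 1" .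
  then have "card ?T \<le> k+2" by simp
  moreover have "finite T" using assms(1) finite_VV finite_subset by blast
  ultimately show ?thesis using True by (simp add: card_Diff_singleton)
qed

lemma cover_count:
  assumes "finite F" "\<forall>(I,J)\<in>F. I \<times> J \<subseteq> VV k" "HH k \<subseteq> (\<Union>(I,J)\<in>F. I \<times> J)"
  shows "2*k+7 \<le> 2 * card F"
proof -
  have "HH k \<subseteq> (\<Union>Q\<in>F. fst Q \<times> snd Q \<inter> HH k)" using assms(3) by force
  then have "card (HH k) \<le> card (\<Union>Q\<in>F. fst Q \<times> snd Q \<inter> HH k)"
    using assms(1) finite_HH by (intro card_mono) auto
  also have "\<dots> \<le> (\<Sum>Q\<in>F. card (fst Q \<times> snd Q \<inter> HH k))" using card_UN_le[OF assms(1)] .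
  also have "\<dots> \<le> (\<Sum>Q\<in>F. 2)"
  proof (rule sum_mono)
    fix Q assume Q: "Q \<in> F"
    obtain I J where IJ: "Q = (I,J)" by (cases Q)
    then have "fst Q \<times> snd Q \<subseteq> VV k" using assms(2) Q by auto
    then show "card (fst Q \<times> snd Q \<inter> HH k) \<le> 2" by (rule rect_HH)
  qed
  finally show ?thesis using card_HH by simp
qed


lemma M_eq: "Mmat (k+4) i j = (if (i,j) \<in> VV k then One else Zero)"
  unfolding Mmat_def Cmat_def VV_def by auto

lemma Q_eq: "qmark (Mmat (k+4)) {(k+4,k+4)} i j = (if (i,j) = (k+4,k+4) then Qm else if (i,j) \<in> VV k then One else Zero)"
  unfolding qmark_def M_eq by simp

lemma z_in: "(k+4,k+4) \<in> VV k" by (simp add: VV_def)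

lemma nzs_M: "nzs (Mmat (k+4)) = VV k"
  by (auto simp: nzs_def M_eq)

lemma nzs_Q: "nzs (qmark (Mmat (k+4)) {(k+4,k+4)}) = VV k"
  using z_in by (auto simp: nzs_def Q_eq)

lemma supp_M: "supp R C (Mmat (k+4)) = VV k \<inter> R \<times> C"
  by (auto simp: supp_def M_eq)

lemma supp_Q: "supp R C (qmark (Mmat (k+4)) {(k+4,k+4)}) = (VV k - {(k+4,k+4)}) \<inter> R \<times> C"
  by (auto simp: supp_def Q_eq)

lemma V_range: "(a,b) \<in> VV k \<Longrightarrow> 1 \<le> a \<and> a \<le> k+4 \<and> 1 \<le> b \<and> b \<le> k+4"
  unfolding VV_def by auto

lemma VV_sub: "VV k \<subseteq> {1..k+4} \<times> {1..k+4}"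
  using V_range by fastforce

lemma HH_full:
  assumes "HH k \<subseteq> R \<times> C"
  shows "{1..k+4} \<subseteq> R \<and> {1..k+4} \<subseteq> C"
proof (intro conjI subsetI)
  fix a assume a: "a \<in> {1..k+4}"
  have "\<exists>b. (a,b) \<in> HH k"
  proof -
    consider "a \<le> k+2" | "a = k+3" | "a = k+4" using a by fastforce
    then show ?thesis
    proof cases
      case 1 then show ?thesis using a by (intro exI[of _ a]) (auto simp: HH_def VV_def)
    next
      case 2 then show ?thesis by (intro exI[of _ 1]) (auto simp: HH_def VV_def)
    next
      case 3 then show ?thesis by (intro exI[of _ "k+3"]) (auto simp: HH_def VV_def)
    qed
  qed
  then show "a \<in> R" using assms by blast
next
  fix b assume b: "b \<in> {1..k+4}"
  have "\<exists>a. (a,b) \<in> HH k"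
  proof -
    consider "b \<le> k+2" | "b = k+3" | "b = k+4" using b by fastforce
    then show ?thesis
    proof cases
      case 1 then show ?thesis using b by (intro exI[of _ b]) (auto simp: HH_def VV_def)
    next
      case 2 then show ?thesis by (intro exI[of _ "k+4"]) (auto simp: HH_def VV_def)
    next
      case 3 then show ?thesis by (intro exI[of _ "k+3"]) (auto simp: HH_def VV_def)
    qed
  qed
  then show "b \<in> C" using assms by blast
qed

lemma rcadj_eq:
  assumes "W \<subseteq> R \<times> C"
  shows "\<forall>p\<in>W. \<forall>q\<in>W. rc_adj R C Y p q = EE (nzs Y) p q"
  using common_rect_iff[of _ R C _ Y] assms unfolding rc_adj_def EE_def by blast

lemma good_iso_br:
  assumes "finite R" "finite C" "nzs Y = VV k" "supp R C Y = S" "goodV (VV k) S"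
  shows "iso_num R C Y = br R C Y"
proof -
  obtain T F where TF: "T \<subseteq> S" "\<forall>p\<in>T. \<forall>q\<in>T. p \<noteq> q \<longrightarrow> \<not> adjs (VV k) p q" "finite F"
     "\<forall>(I,J)\<in>F. I \<times> J \<subseteq> VV k" "S \<subseteq> (\<Union>(I,J)\<in>F. I \<times> J)" "card F \<le> card T"
    using assms(5) unfolding goodV_def by blast
  have "isolated R C Y T" unfolding isolated_iff using TF(1,2) assms(3,4) by simp
  then show ?thesis using iso_eq_br[OF assms(1,2) _ TF(3)] TF(4,5,6) assms(3,4) by simp
qed

lemma col_n: "(a,k+4) \<in> VV k \<Longrightarrow> a = k+3 \<or> a = k+4"
  unfolding VV_def by auto

lemma z_nbr: "adjs (VV k) (k+4,k+4) q \<Longrightarrow> q \<in> {k+3,k+4} \<times> {k+3,k+4}"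
  using row_n[of k "snd q"] col_n[of "fst q" k] by (cases q) (auto simp: adjs_def)

lemma firm_part: "firm {1..k+4} {1..k+4} (Mmat (k+4))"
  unfolding firm_def
proof (intro allI impI)
  fix R C assume RC: "R \<subseteq> {1..k+4}" "C \<subseteq> {1..k+4}"
  have fin: "finite R" "finite C" using RC finite_subset by blast+
  let ?S = "VV k \<inter> R \<times> C"
  have fS: "finite ?S" using finite_VV by blast
  have "goodV (VV k) ?S"
  proof (cases "(k+4,k+4) \<in> ?S")
    case True
    let ?B = "{k+3,k+4} \<times> {k+3,k+4}"
    have "goodV (VV k) (?S - ?B)"
    proof (rule good_all)
      show "?S - ?B \<subseteq> VV k" by blast
      have "(k+3,k+4) \<in> HH k" by (simp add: HH_def VV_def)
      then show "\<not> HH k \<subseteq> ?S - ?B" by blast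
    qed
    then show ?thesis using good_simpl[OF fS True blk] z_nbr by blast
  next
    case False
    have "\<not> HH k \<subseteq> ?S"
    proof
      assume "HH k \<subseteq> ?S"
      then have "{1..k+4} \<subseteq> R \<and> {1..k+4} \<subseteq> C" using HH_full by blast
      then have "k+4 \<in> R" "k+4 \<in> C" by auto
      then show False using False z_in[of k] by blast
    qed
    then show ?thesis using good_all by blast
  qed
  then show "iso_num R C (Mmat (k+4)) = br R C (Mmat (k+4))"
    using good_iso_br[OF fin nzs_M supp_M] by blast
qed

lemma mnf_strict: "iso_num {1..k+4} {1..k+4} (qmark (Mmat (k+4)) {(k+4,k+4)}) < br {1..k+4} {1..k+4} (qmark (Mmat (k+4)) {(k+4,k+4)})"
proof -
  let ?Q = "qmark (Mmat (k+4)) {(k+4,k+4)}"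
  let ?N = "{1..k+4}"
  have fN: "finite ?N" by simp
  obtain T where T: "isolated ?N ?N ?Q T" "iso_num ?N ?N ?Q = card T" using iso_num_attained(1)[OF fN fN] by blast
  have "T \<subseteq> supp ?N ?N ?Q" "\<forall>p\<in>T. \<forall>q\<in>T. p \<noteq> q \<longrightarrow> \<not> adjs (nzs ?Q) p q"
    using T(1) unfolding isolated_iff by blast+
  then have "T \<subseteq> VV k - {(k+4,k+4)}" "\<forall>p\<in>T. \<forall>q\<in>T. p \<noteq> q \<longrightarrow> \<not> adjs (VV k) p q"
    unfolding supp_Q nzs_Q by blast+
  then have "card T \<le> k+3" by (rule iso_bound)
  then have i: "iso_num ?N ?N ?Q \<le> k+3" using T(2) by linarith
  obtain F where F: "rect_cover ?N ?N ?Q F" "card F = br ?N ?N ?Q" using br_attained(1)[OF fN fN] by blast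
  have F1: "finite F" using F(1) unfolding rect_cover_def by blast
  have F2: "\<forall>(I,J)\<in>F. I \<times> J \<subseteq> VV k"
  proof
    fix Q assume Q: "Q \<in> F"
    obtain I J where IJ: "Q = (I,J)" by (cases Q)
    then have "is_rect ?N ?N ?Q I J" using F(1) Q unfolding rect_cover_def by auto
    then have "I \<times> J \<subseteq> nzs ?Q" unfolding is_rect_def nzs_def by auto
    then show "case Q of (I,J) \<Rightarrow> I \<times> J \<subseteq> VV k" using IJ nzs_Q[of k] by simp
  qed
  have F3: "supp ?N ?N ?Q \<subseteq> (\<Union>(I,J)\<in>F. I \<times> J)" using F(1) unfolding rect_cover_def by blast
  have "HH k \<subseteq> supp ?N ?N ?Q" unfolding supp_Q using VV_sub by (auto simp: HH_def)
  then have "HH k \<subseteq> (\<Union>(I,J)\<in>F. I \<times> J)" using F3 by (rule subset_trans)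
  then have "2*k+7 \<le> 2 * card F" using cover_count[OF F1 F2] by blast
  then show ?thesis using i F(2) by linarith
qed

lemma mnf_proper:
  assumes RC: "R \<subseteq> {1..k+4}" "C \<subseteq> {1..k+4}" "(R, C) \<noteq> ({1..k+4}, {1..k+4})"
  shows "iso_num R C (qmark (Mmat (k+4)) {(k+4,k+4)}) = br R C (qmark (Mmat (k+4)) {(k+4,k+4)})"
proof -
  have fin: "finite R" "finite C" using RC finite_subset by blast+
  let ?S = "(VV k - {(k+4,k+4)}) \<inter> R \<times> C"
  have "\<not> HH k \<subseteq> ?S"
  proof
    assume "HH k \<subseteq> ?S"
    then have "{1..k+4} \<subseteq> R \<and> {1..k+4} \<subseteq> C" using HH_full by blast
    then have "R = {1..k+4}" "C = {1..k+4}" using RC(1,2) by blast+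
    then show False using RC(3) by simp
  qed
  moreover have sub: "?S \<subseteq> VV k" by blast
  ultimately have g: "goodV (VV k) ?S" using good_all by blast
  show ?thesis by (rule good_iso_br[OF fin nzs_Q supp_Q g])
qed

lemma mnf_part: "min_non_firm {1..k+4} {1..k+4} (qmark (Mmat (k+4)) {(k+4,k+4)})"
  unfolding min_non_firm_def using mnf_strict mnf_proper by blast

lemma superfirm_proper:
  assumes RC: "R \<subseteq> {1..k+4}" "C \<subseteq> {1..k+4}" "(R, C) \<noteq> ({1..k+4}, {1..k+4})"
  shows "superfirm R C (Mmat (k+4))"
  unfolding superfirm_def perfect_def
proof (intro allI impI)
  fix W assume W: "W \<subseteq> supp R C (Mmat (k+4))"
  then have W1: "W \<subseteq> VV k" "W \<subseteq> R \<times> C" unfolding supp_M by auto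
  have fW: "finite W" using W1 finite_VV finite_subset by blast
  have e: "\<forall>p\<in>W. \<forall>q\<in>W. rc_adj R C (Mmat (k+4)) p q = EE (VV k) p q"
    using rcadj_eq[OF W1(2)] nzs_M by simp
  have "\<not> HH k \<subseteq> W"
  proof
    assume "HH k \<subseteq> W"
    then have "{1..k+4} \<subseteq> R \<and> {1..k+4} \<subseteq> C" using HH_full W1 by blast
    then have "R = {1..k+4}" "C = {1..k+4}" using RC(1,2) by blast+
    then show False using RC(3) by simp
  qed
  then obtain g where "colouring W (EE (VV k)) (clique_num W (EE (VV k))) g" using col_all W1 by blast
  then have "chrom_num W (EE (VV k)) = clique_num W (EE (VV k))" using chrom_eq_clique[OF fW] by blast
  then show "chrom_num W (rc_adj R C (Mmat (k+4))) = clique_num W (rc_adj R C (Mmat (k+4)))"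
    using chrom_cong[OF e] by simp
qed

lemma not_superfirm: "\<not> superfirm {1..k+4} {1..k+4} (Mmat (k+4))"
  unfolding superfirm_def perfect_def
proof
  let ?N = "{1..k+4}"
  assume a: "\<forall>W. W \<subseteq> supp ?N ?N (Mmat (k+4)) \<longrightarrow> chrom_num W (rc_adj ?N ?N (Mmat (k+4))) = clique_num W (rc_adj ?N ?N (Mmat (k+4)))"
  have HS: "HH k \<subseteq> supp ?N ?N (Mmat (k+4))" unfolding supp_M using VV_sub by (auto simp: HH_def)
  have H2: "HH k \<subseteq> ?N \<times> ?N" using HS supp_sub by blast
  have e: "\<forall>p\<in>HH k. \<forall>q\<in>HH k. rc_adj ?N ?N (Mmat (k+4)) p q = EE (VV k) p q"
    using rcadj_eq[OF H2] nzs_M by simp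
  have eq: "chrom_num (HH k) (EE (VV k)) = clique_num (HH k) (EE (VV k))"
    using a HS chrom_cong[OF e] by simp
  obtain K where K: "K \<subseteq> HH k" "is_clique K (EE (VV k))" "card K = clique_num (HH k) (EE (VV k))"
    using clique_facts(1)[OF finite_HH] by blast
  have "clique_num (HH k) (EE (VV k)) \<le> 2" using clique_HH[OF K(1,2)] K(3) by simp
  moreover have "chrom_num (HH k) (EE (VV k)) > 2"
  proof -
    have m: "\<And>k' f. k' \<le> 2 \<Longrightarrow> colouring (HH k) (EE (VV k)) k' f \<Longrightarrow> colouring (HH k) (EE (VV k)) 2 f"
      by (rule colouring_mono)
    show ?thesis by (rule chrom_ge[OF finite_HH no2col m])
  qed
  ultimately show False using eq by simp
qed

lemma mns_part: "min_non_superfirm {1..k+4} {1..k+4} (Mmat (k+4))"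
  unfolding min_non_superfirm_def using not_superfirm superfirm_proper by blast

theorem lemma8:
  fixes n :: nat
  assumes "n \<ge> 4"
  shows "firm {1..n} {1..n} (Mmat n) \<and> min_non_superfirm {1..n} {1..n} (Mmat n) \<and>
         min_non_firm {1..n} {1..n} (qmark (Mmat n) {(n, n)})"
proof -
  obtain k where n: "n = k+4" using assms by (metis add.commute le_add_diff_inverse)
  show ?thesis unfolding n using firm_part mns_part mnf_part by blast
qed

end
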